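(* Let $C$ be a binary linear $[n,k]$ code whose hull $\mathrm{Hull}(C)=C\cap C^{\perp}$ has dimension $\ell$, where $0\le\ell\le k$. Let $G$ be a $k\times n$ generator matrix of $C$ with rows $\mathbf r_1,\dots,\mathbf r_k$ and $H$ an $(n-k)\times n$ parity check matrix of $C$ with rows $\mathbf s_1,\dots,\mathbf s_{n-k}$. Suppose $\mathbf x=(x_1,\dots,x_n)\in\mathbb F_2^n$ satisfies $\mathbf x\cdot\mathbf x=0$. Put $y_i=\mathbf x\cdot\mathbf r_i$ ($1\le i\le k$) and $z_j=\mathbf x\cdot\mathbf s_j$ ($1\le j\le n-k$). Then the matrix \[ G_3=\begin{bmatrix} 1 & 0 & x_1\ \cdots\ x_n\\ y_1 & y_1 & \mathbf r_1\\ \vdots & \vdots & \vdots\\ y_k & y_k & \mathbf r_k\end{bmatrix} \] generates a binary linear $[n+2,k+1]$ code $C_3$ whose hull has dimension $\ell$, and the matrix \[ H_3=\begin{bmatrix} 0 & 1 & x_1\ \cdots\ x_n\\ z_1 & z_1 & \mathbf s_1\\ \vdots & \vdots & \vdots\\ z_{n-k} & z_{n-k} & \mathbf s_{n-k}\end{bmatrix} \] is a parity check matrix for $C_3$.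
   Context: All codes are binary linear codes; the dual is taken with respect to the standard dot product on $\mathbb F_2^n$, and $\mathrm{Hull}(C)=C\cap C^{\perp}$. A parity check matrix of $C$ is a generator matrix of $C^{\perp}$. The code $C_3$ is called Construction IV. *)

theory Defs
  imports "Jordan_Normal_Form.VS_Connect" "HOL-Library.Z2"
begin

definition code_of :: "nat \<Rightarrow> bit mat \<Rightarrow> bit vec set" where
  "code_of n M = vec_space.row_space n M"

definition code_dim :: "nat \<Rightarrow> bit vec set \<Rightarrow> nat" where
  "code_dim n W = vectorspace.dim class_ring ((module_vec TYPE(bit) n)\<lparr>carrier := W\<rparr>)"

definition dual :: "nat \<Rightarrow> bit vec set \<Rightarrow> bit vec set" where
  "dual n C = {v \<in> carrier_vec n. \<forall>c \<in> C. v \<bullet> c = 0}"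

definition code_hull :: "nat \<Rightarrow> bit vec set \<Rightarrow> bit vec set" where
  "code_hull n C = C \<inter> dual n C"

definition is_generator_matrix :: "nat \<Rightarrow> nat \<Rightarrow> bit mat \<Rightarrow> bit vec set \<Rightarrow> bool" where
  "is_generator_matrix n k G C \<longleftrightarrow>
     G \<in> carrier_mat k n \<and> code_of n G = C \<and> code_dim n C = k"

definition is_parity_check_matrix :: "nat \<Rightarrow> nat \<Rightarrow> bit mat \<Rightarrow> bit vec set \<Rightarrow> bool" where
  "is_parity_check_matrix n k H C \<longleftrightarrow> is_generator_matrix n (n - k) H (dual n C)"

text \<open>Construction IV.  Row 0 of G3 is (1, 0, x); row i+1 is (y_i, y_i, r_i) with y_i = x . r_i.
  Row 0 of H3 is (0, 1, x); row j+1 is (z_j, z_j, s_j) with z_j = x . s_j.\<close>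
definition constr_G3 :: "bit vec \<Rightarrow> bit mat \<Rightarrow> bit mat" where
  "constr_G3 x G = mat (dim_row G + 1) (dim_col G + 2) (\<lambda>(i, j).
     if i = 0 then (if j = 0 then 1 else if j = 1 then 0 else x $ (j - 2))
     else (if j < 2 then x \<bullet> row G (i - 1) else G $$ (i - 1, j - 2)))"

definition constr_H3 :: "bit vec \<Rightarrow> bit mat \<Rightarrow> bit mat" where
  "constr_H3 x H = mat (dim_row H + 1) (dim_col H + 2) (\<lambda>(i, j).
     if i = 0 then (if j = 0 then 0 else if j = 1 then 1 else x $ (j - 2))
     else (if j < 2 then x \<bullet> row H (i - 1) else H $$ (i - 1, j - 2)))"

end

theory Submission
  imports Defs
begin

lemma UNIV_bit: "(UNIV::bit set) = {0,1}"
  by auto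

lemma card_UNIV_bit: "card (UNIV::bit set) = 2"
  unfolding UNIV_bit by simp

lemma finite_carrier_vec_bit: "finite (carrier_vec n :: bit vec set)"
proof -
  have "carrier_vec n \<subseteq> (\<lambda>f. vec n f) ` (PiE {..<n} (\<lambda>_. (UNIV::bit set)))"
  proof
    fix v :: "bit vec" assume v: "v \<in> carrier_vec n"
    have "v = vec n (restrict (\<lambda>i. v $ i) {..<n})" using v by (auto simp: restrict_def)
    moreover have "restrict (\<lambda>i. v $ i) {..<n} \<in> PiE {..<n} (\<lambda>_. (UNIV::bit set))" by simp
    ultimately show "v \<in> (\<lambda>f. vec n f) ` (PiE {..<n} (\<lambda>_. (UNIV::bit set)))" by (rule image_eqI)
  qed
  moreover have "finite (PiE {..<n} (\<lambda>_. (UNIV::bit set)))"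
    by (rule finite_PiE) (auto simp: UNIV_bit)
  ultimately show ?thesis using finite_subset by blast
qed

definition sub2 :: "nat \<Rightarrow> bit vec set \<Rightarrow> bool" where
  "sub2 n W \<longleftrightarrow> W \<subseteq> carrier_vec n \<and> 0\<^sub>v n \<in> W \<and> (\<forall>u\<in>W. \<forall>v\<in>W. u + v \<in> W)"

lemma sub2_subspace:
  assumes "sub2 n W"
  shows "subspace class_ring W (module_vec TYPE(bit) n)"
proof -
  interpret vec_space "TYPE(bit)" n .
  have sm: "c \<cdot>\<^sub>v v \<in> W" if "v \<in> W" for c :: bit and v
  proof (cases "c = 0")
    case True then show ?thesis using assms that unfolding sub2_def by (auto)
  next
    case False then show ?thesis using assms that unfolding sub2_def by (auto)
  qed
  have vs: "vectorspace class_ring V" by (rule vec_vs)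
  then have md: "module class_ring V" by (simp add: vectorspace_def)
  show ?thesis
    unfolding subspace_def submodule_def
  proof (intro conjI allI impI vs md)
    show "W \<subseteq> carrier V" using assms by (simp add: sub2_def)
    show "\<zero>\<^bsub>V\<^esub> \<in> W" using assms by (simp add: sub2_def)
    fix v w assume "v \<in> W" "w \<in> W"
    then show "v \<oplus>\<^bsub>V\<^esub> w \<in> W" using assms by (simp add: sub2_def)
  next
    fix c :: bit and v assume "c \<in> carrier class_ring" "v \<in> W"
    then show "c \<odot>\<^bsub>V\<^esub> v \<in> W" using sm by simp
  qed
qed

lemma sub2_card:
  assumes "sub2 n W"
  shows "card W = 2 ^ code_dim n W"
proof -
  interpret vec_space "TYPE(bit)" n .
  have sub: "subspace class_ring W V" using sub2_subspace assms .
  interpret W: vectorspace class_ring "vs W" by (rule subspace_is_vs[OF sub])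
  have WC: "W \<subseteq> carrier_vec n" using assms by (simp add: sub2_def)
  have finW: "finite W" using finite_subset[OF WC finite_carrier_vec_bit] .
  have gen: "W.span W = W"
  proof
    show "W.span W \<subseteq> W" using W.span_is_subset2[of W] by simp
    show "W \<subseteq> W.span W" using W.in_own_span[of W] by simp
  qed
  have "W.fin_dim" unfolding W.fin_dim_def using finW gen by auto
  then obtain \<beta> where fb: "finite \<beta>" and bb: "W.basis \<beta>" using W.finite_basis_exists by blast
  have dim: "W.dim = card \<beta>" using W.dim_basis[OF fb bb] .
  have cd: "code_dim n W = W.dim" unfolding code_dim_def by simp
  have bW: "\<beta> \<subseteq> W" using bb unfolding W.basis_def by simp
  have crit: "\<forall>v. v \<in> W \<longrightarrow> (\<exists>! a. a \<in> \<beta> \<rightarrow>\<^sub>E carrier class_ring \<and> W.lincomb a \<beta> = v)"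
    using W.basis_criterion[OF fb] bW bb by simp
  have cK: "carrier (class_ring :: bit ring) = UNIV" by (simp add: class_ring_simps)
  have bij: "bij_betw (\<lambda>a. W.lincomb a \<beta>) (\<beta> \<rightarrow>\<^sub>E (UNIV::bit set)) W"
  proof (rule bij_betwI')
    fix a b assume a: "a \<in> \<beta> \<rightarrow>\<^sub>E (UNIV::bit set)" and b: "b \<in> \<beta> \<rightarrow>\<^sub>E (UNIV::bit set)"
    have la: "W.lincomb a \<beta> \<in> W" using W.lincomb_closed[of \<beta> a] bW a by auto
    show "(W.lincomb a \<beta> = W.lincomb b \<beta>) = (a = b)"
    proof
      assume e: "W.lincomb a \<beta> = W.lincomb b \<beta>"
      from crit la have "\<exists>! c. c \<in> \<beta> \<rightarrow>\<^sub>E carrier class_ring \<and> W.lincomb c \<beta> = W.lincomb a \<beta>" by blast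
      then show "a = b" using a b e cK by auto
    qed simp
  next
    fix a assume a: "a \<in> \<beta> \<rightarrow>\<^sub>E (UNIV::bit set)"
    show "W.lincomb a \<beta> \<in> W" using W.lincomb_closed[of \<beta> a] bW a by auto
  next
    fix v assume "v \<in> W"
    then obtain a where "a \<in> \<beta> \<rightarrow>\<^sub>E carrier class_ring" "W.lincomb a \<beta> = v" using crit by blast
    then show "\<exists>a \<in> \<beta> \<rightarrow>\<^sub>E (UNIV::bit set). v = W.lincomb a \<beta>" using cK by auto
  qed
  have "card W = card (\<beta> \<rightarrow>\<^sub>E (UNIV::bit set))" using bij_betw_same_card[OF bij] by simp
  also have "\<dots> = 2 ^ card \<beta>" using fb by (simp add: card_PiE card_UNIV_bit)
  finally show ?thesis using cd dim by simp
qed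

lemma bit_add_self[simp]: "(t::bit) + t = 0"
  by (cases "t = 0") auto

lemma bit_add_self2[simp]: "(t::bit) + (t + s) = s"
  by (metis add.assoc add.left_neutral bit_add_self)

lemma bit_mult_self[simp]: "(t::bit) * t = t"
  by (cases "t = 0") auto

lemma sum2: "(\<Sum>i\<in>{0..<(N::nat)+2}. (f i :: 'a :: comm_monoid_add)) = f 0 + f 1 + (\<Sum>i\<in>{0..<N}. f (i+2))"
  unfolding atLeast0LessThan numeral_2_eq_2 add_Suc_right add_0_right sum.lessThan_Suc_shift
  by (simp add: add.assoc)

lemma sum1: "(\<Sum>i\<in>{0..<(m::nat)+1}. (f i :: 'a :: comm_monoid_add)) = f 0 + (\<Sum>i\<in>{0..<m}. f (i+1))"
  unfolding atLeast0LessThan Suc_eq_plus1[symmetric] sum.lessThan_Suc_shift by simp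

lemma sub2_Int: "sub2 n A \<Longrightarrow> sub2 n B \<Longrightarrow> sub2 n (A \<inter> B)"
  unfolding sub2_def by blast

lemma sub2_dual: assumes "C \<subseteq> carrier_vec n" shows "sub2 n (dual n C)"
  unfolding sub2_def dual_def
proof (intro conjI ballI)
  show "{v \<in> carrier_vec n. \<forall>c\<in>C. v \<bullet> c = 0} \<subseteq> carrier_vec n" by blast
  show "0\<^sub>v n \<in> {v \<in> carrier_vec n. \<forall>c\<in>C. v \<bullet> c = 0}" using assms by auto
  fix u v assume u: "u \<in> {v \<in> carrier_vec n. \<forall>c\<in>C. v \<bullet> c = 0}" and v: "v \<in> {v \<in> carrier_vec n. \<forall>c\<in>C. v \<bullet> c = 0}"
  show "u + v \<in> {v \<in> carrier_vec n. \<forall>c\<in>C. v \<bullet> c = 0}"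
    using u v assms add_scalar_prod_distrib[of u n v] by auto
qed

lemma code_of_eq:
  assumes M: "M \<in> carrier_mat m N"
  shows "code_of N M = {M\<^sup>T *\<^sub>v y | y. y \<in> carrier_vec m}"
proof -
  have "code_of N M = {w\<in>carrier_vec (dim_col M). \<exists>y\<in>carrier_vec (dim_row M). M\<^sup>T *\<^sub>v y = w}"
    unfolding code_of_def using vec_space.row_space_eq[OF M] .
  also have "\<dots> = {M\<^sup>T *\<^sub>v y | y. y \<in> carrier_vec m}" using M by auto
  finally show ?thesis .
qed

lemma sub2_code_of: assumes M: "M \<in> carrier_mat m N" shows "sub2 N (code_of N M)"
  unfolding sub2_def code_of_eq[OF M]
proof (intro conjI ballI)
  show "{M\<^sup>T *\<^sub>v y |y. y \<in> carrier_vec m} \<subseteq> carrier_vec N" using M by auto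
  have "M\<^sup>T *\<^sub>v 0\<^sub>v m = 0\<^sub>v N" using M by auto
  then show "0\<^sub>v N \<in> {M\<^sup>T *\<^sub>v y |y. y \<in> carrier_vec m}"
    by (intro CollectI exI[of _ "0\<^sub>v m"]) auto
  fix u v assume "u \<in> {M\<^sup>T *\<^sub>v y |y. y \<in> carrier_vec m}" "v \<in> {M\<^sup>T *\<^sub>v y |y. y \<in> carrier_vec m}"
  then obtain y1 y2 where y: "y1 \<in> carrier_vec m" "y2 \<in> carrier_vec m" "u = M\<^sup>T *\<^sub>v y1" "v = M\<^sup>T *\<^sub>v y2" by blast
  have "M\<^sup>T *\<^sub>v (y1 + y2) = u + v" using y M by (simp add: mult_add_distrib_mat_vec)
  moreover have "y1 + y2 \<in> carrier_vec m" using y by simp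
  ultimately show "u + v \<in> {M\<^sup>T *\<^sub>v y |y. y \<in> carrier_vec m}"
    by (intro CollectI exI[of _ "y1 + y2"]) auto
qed

lemma card_carrier_vec_bit: "card (carrier_vec n :: bit vec set) = 2 ^ n"
proof -
  interpret vec_space "TYPE(bit)" n .
  have "sub2 n (carrier_vec n)" unfolding sub2_def by auto
  then have "card (carrier_vec n :: bit vec set) = 2 ^ code_dim n (carrier_vec n)" by (rule sub2_card)
  moreover have "code_dim n (carrier_vec n) = n"
    unfolding code_dim_def using dim_is_n by (simp add: module_vec_def)
  ultimately show ?thesis by simp
qed

definition V3 :: "bit \<Rightarrow> bit \<Rightarrow> bit vec \<Rightarrow> bit vec" where
  "V3 p q w = vec (dim_vec w + 2) (\<lambda>j. if j = 0 then p else if j = 1 then q else w $ (j - 2))"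

lemma V3_carrier[simp]: "w \<in> carrier_vec N \<Longrightarrow> V3 p q w \<in> carrier_vec (N + 2)"
  unfolding V3_def by auto

lemma V3_dim[simp]: "dim_vec (V3 p q w) = dim_vec w + 2"
  unfolding V3_def by auto

lemma V3_add: "dim_vec w' = dim_vec w \<Longrightarrow> V3 p q w + V3 p' q' w' = V3 (p + p') (q + q') (w + w')"
  unfolding V3_def by (rule eq_vecI) auto

lemma V3_smult: "a \<cdot>\<^sub>v V3 p q w = V3 (a * p) (a * q) (a \<cdot>\<^sub>v w)"
  unfolding V3_def by (rule eq_vecI) auto

lemma V3_scalar: assumes d: "dim_vec w' = dim_vec w" shows "V3 p q w \<bullet> V3 p' q' w' = p * p' + q * q' + w \<bullet> w'"
proof -
  have "V3 p q w \<bullet> V3 p' q' w' = (\<Sum>i\<in>{0..<dim_vec w' + 2}. V3 p q w $ i * V3 p' q' w' $ i)"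
    by (simp add: scalar_prod_def)
  also have "\<dots> = V3 p q w $ 0 * V3 p' q' w' $ 0 + V3 p q w $ 1 * V3 p' q' w' $ 1 +
     (\<Sum>i\<in>{0..<dim_vec w'}. V3 p q w $ (i+2) * V3 p' q' w' $ (i+2))"
    by (rule sum2)
  also have "(\<Sum>i\<in>{0..<dim_vec w'}. V3 p q w $ (i+2) * V3 p' q' w' $ (i+2)) = w \<bullet> w'"
    unfolding scalar_prod_def by (rule sum.cong) (use d in \<open>auto simp: V3_def\<close>)
  finally show ?thesis by (simp add: V3_def)
qed

lemma V3_eq: "dim_vec w' = dim_vec w \<Longrightarrow> (V3 p q w = V3 p' q' w') \<longleftrightarrow> (p = p' \<and> q = q' \<and> w = w')"
proof
  assume d: "dim_vec w' = dim_vec w" and e: "V3 p q w = V3 p' q' w'"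
  have "V3 p q w $ 0 = V3 p' q' w' $ 0" "V3 p q w $ 1 = V3 p' q' w' $ 1" using e by auto
  then have pq: "p = p'" "q = q'" unfolding V3_def by auto
  have "w = w'"
  proof (rule eq_vecI)
    fix i assume i: "i < dim_vec w'"
    have "V3 p q w $ (i+2) = V3 p' q' w' $ (i+2)" using e by simp
    then show "w $ i = w' $ i" using i d unfolding V3_def by auto
  qed (use d in auto)
  then show "p = p' \<and> q = q' \<and> w = w'" using pq by simp
qed auto

lemma idx2: "i \<noteq> 0 \<Longrightarrow> i \<noteq> Suc 0 \<Longrightarrow> Suc (Suc (i - 2)) = (i::nat)"
  by arith

lemma V3_decomp: "v \<in> carrier_vec (N + 2) \<Longrightarrow> v = V3 (v $ 0) (v $ 1) (vec N (\<lambda>j. v $ (j + 2)))"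
  unfolding V3_def by (rule eq_vecI) (auto simp: idx2)

lemma V3_zero: "V3 0 0 (0\<^sub>v N) = 0\<^sub>v (N + 2)"
  unfolding V3_def by (rule eq_vecI) auto

definition extM :: "bit vec \<Rightarrow> bit vec \<Rightarrow> bit mat \<Rightarrow> bit mat" where
  "extM u x M = mat (dim_row M + 1) (dim_col M + 2) (\<lambda>(i, j).
     if i = 0 then u $ j else (if j < 2 then x \<bullet> row M (i - 1) else M $$ (i - 1, j - 2)))"

lemma constr_G3_ext: "dim_col G = dim_vec x \<Longrightarrow> constr_G3 x G = extM (V3 1 0 x) x G"
  unfolding constr_G3_def extM_def V3_def by (rule eq_matI) auto

lemma constr_H3_ext: "dim_col H = dim_vec x \<Longrightarrow> constr_H3 x H = extM (V3 0 1 x) x H"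
  unfolding constr_H3_def extM_def V3_def by (rule eq_matI) auto

lemma scalar_transpose:
  assumes M: "M \<in> carrier_mat m N" and x: "x \<in> carrier_vec N" and y: "y \<in> carrier_vec m"
  shows "x \<bullet> (M\<^sup>T *\<^sub>v y) = (\<Sum>i\<in>{0..<m}. (x \<bullet> row M i) * y $ i)"
proof -
  have "x \<bullet> (M\<^sup>T *\<^sub>v y) = (\<Sum>j\<in>{0..<N}. x $ j * (\<Sum>i\<in>{0..<m}. M $$ (i, j) * y $ i))"
    using M y unfolding scalar_prod_def by (auto simp: scalar_prod_def intro!: sum.cong)
  also have "\<dots> = (\<Sum>j\<in>{0..<N}. \<Sum>i\<in>{0..<m}. x $ j * M $$ (i, j) * y $ i)"
    by (simp add: sum_distrib_left mult.assoc)
  also have "\<dots> = (\<Sum>i\<in>{0..<m}. \<Sum>j\<in>{0..<N}. x $ j * M $$ (i, j) * y $ i)"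
    by (rule sum.swap)
  also have "\<dots> = (\<Sum>i\<in>{0..<m}. (x \<bullet> row M i) * y $ i)"
    using M x unfolding scalar_prod_def by (auto simp: sum_distrib_right intro!: sum.cong)
  finally show ?thesis .
qed

lemma extM_carrier: "M \<in> carrier_mat m N \<Longrightarrow> extM u x M \<in> carrier_mat (m + 1) (N + 2)"
  unfolding extM_def by auto

lemma extM_mult:
  assumes M: "M \<in> carrier_mat m N" and x: "x \<in> carrier_vec N" and u: "u \<in> carrier_vec (N + 2)"
    and y: "y \<in> carrier_vec (m + 1)"
  shows "(extM u x M)\<^sup>T *\<^sub>v y = y $ 0 \<cdot>\<^sub>v u +
     V3 (x \<bullet> (M\<^sup>T *\<^sub>v vec m (\<lambda>i. y $ (i + 1)))) (x \<bullet> (M\<^sup>T *\<^sub>v vec m (\<lambda>i. y $ (i + 1))))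
        (M\<^sup>T *\<^sub>v vec m (\<lambda>i. y $ (i + 1)))"
    (is "_ = _ + V3 ?s ?s ?c")
proof -
  let ?E = "extM u x M"
  let ?yy = "vec m (\<lambda>i. y $ (i + 1))"
  have E: "?E \<in> carrier_mat (m + 1) (N + 2)" using extM_carrier[OF M] .
  have yy: "?yy \<in> carrier_vec m" by simp
  have c: "?c \<in> carrier_vec N" using M yy by simp
  show ?thesis
  proof (rule eq_vecI)
    show "dim_vec (?E\<^sup>T *\<^sub>v y) = dim_vec (y $ 0 \<cdot>\<^sub>v u + V3 ?s ?s ?c)" using E u c M by simp
    fix j assume "j < dim_vec (y $ 0 \<cdot>\<^sub>v u + V3 ?s ?s ?c)"
    then have j: "j < N + 2" using u c M by simp
    have "(?E\<^sup>T *\<^sub>v y) $ j = (\<Sum>i\<in>{0..<m+1}. ?E $$ (i, j) * y $ i)"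
      using E y j by (auto simp: scalar_prod_def intro!: sum.cong)
    also have "\<dots> = ?E $$ (0, j) * y $ 0 + (\<Sum>i\<in>{0..<m}. ?E $$ (i + 1, j) * y $ (i + 1))"
      by (rule sum1)
    also have "\<dots> = u $ j * y $ 0 + (\<Sum>i\<in>{0..<m}. (if j < 2 then x \<bullet> row M i else M $$ (i, j - 2)) * ?yy $ i)"
      using M j by (auto simp: extM_def intro!: sum.cong)
    also have "\<dots> = (y $ 0 \<cdot>\<^sub>v u + V3 ?s ?s ?c) $ j"
    proof -
      have dV: "dim_vec (V3 ?s ?s ?c) = N + 2" using c M by simp
      have r: "(y $ 0 \<cdot>\<^sub>v u + V3 ?s ?s ?c) $ j = y $ 0 * u $ j + V3 ?s ?s ?c $ j"
        using j u dV by (simp only: index_add_vec index_smult_vec carrier_vecD)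
      show ?thesis
      proof (cases "j < 2")
        case True
        have "(\<Sum>i\<in>{0..<m}. (if j < 2 then x \<bullet> row M i else M $$ (i, j - 2)) * ?yy $ i) = ?s"
          using True scalar_transpose[OF M x yy] by (simp only: if_True)
        moreover have "V3 ?s ?s ?c $ j = ?s" using True j c M unfolding V3_def by auto
        ultimately show ?thesis unfolding r by (simp only: mult.commute)
      next
        case False
        have "(\<Sum>i\<in>{0..<m}. (if j < 2 then x \<bullet> row M i else M $$ (i, j - 2)) * ?yy $ i) = ?c $ (j - 2)"
          using False M j by (auto simp: scalar_prod_def intro!: sum.cong)
        moreover have "V3 ?s ?s ?c $ j = ?c $ (j - 2)" using False j c M unfolding V3_def by auto
        ultimately show ?thesis unfolding r by (simp only: mult.commute)
      qed
    qed
    finally show "(?E\<^sup>T *\<^sub>v y) $ j = (y $ 0 \<cdot>\<^sub>v u + V3 ?s ?s ?c) $ j" .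
  qed
qed

lemma code_of_ext:
  assumes M: "M \<in> carrier_mat m N" and x: "x \<in> carrier_vec N" and u: "u \<in> carrier_vec (N + 2)"
  shows "code_of (N + 2) (extM u x M) = {a \<cdot>\<^sub>v u + V3 (x \<bullet> c) (x \<bullet> c) c | a c. c \<in> code_of N M}"
proof -
  have E: "extM u x M \<in> carrier_mat (m + 1) (N + 2)" using extM_carrier[OF M] .
  show ?thesis
    unfolding code_of_eq[OF E] code_of_eq[OF M]
  proof (intro equalityI subsetI)
    fix v assume "v \<in> {(extM u x M)\<^sup>T *\<^sub>v y |y. y \<in> carrier_vec (m + 1)}"
    then obtain y where y: "y \<in> carrier_vec (m + 1)" and v: "v = (extM u x M)\<^sup>T *\<^sub>v y" by blast
    have "vec m (\<lambda>i. y $ (i + 1)) \<in> carrier_vec m" by simp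
    then show "v \<in> {a \<cdot>\<^sub>v u + V3 (x \<bullet> c) (x \<bullet> c) c |a c. c \<in> {M\<^sup>T *\<^sub>v y |y. y \<in> carrier_vec m}}"
      unfolding v extM_mult[OF M x u y] by blast
  next
    fix v assume "v \<in> {a \<cdot>\<^sub>v u + V3 (x \<bullet> c) (x \<bullet> c) c |a c. c \<in> {M\<^sup>T *\<^sub>v y |y. y \<in> carrier_vec m}}"
    then obtain a y0 where y0: "y0 \<in> carrier_vec m"
      and v: "v = a \<cdot>\<^sub>v u + V3 (x \<bullet> (M\<^sup>T *\<^sub>v y0)) (x \<bullet> (M\<^sup>T *\<^sub>v y0)) (M\<^sup>T *\<^sub>v y0)" by blast
    define y where "y = vec (m + 1) (\<lambda>i. if i = 0 then a else y0 $ (i - 1))"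
    have y: "y \<in> carrier_vec (m + 1)" unfolding y_def by simp
    have yy: "vec m (\<lambda>i. y $ (i + 1)) = y0" using y0 unfolding y_def by (intro eq_vecI) auto
    have y0a: "y $ 0 = a" unfolding y_def by simp
    have "v = (extM u x M)\<^sup>T *\<^sub>v y" unfolding extM_mult[OF M x u y] yy y0a v ..
    then show "v \<in> {(extM u x M)\<^sup>T *\<^sub>v y |y. y \<in> carrier_vec (m + 1)}" using y by blast
  qed
qed

declare add_bit_eq_xor[simp del] mult_bit_eq_and[simp del]

lemma bit_cases: "(t::bit) = 0 \<or> t = 1" by auto

lemma bit_pair: "((p::bit) + s) + (q + s) = p + q"
  using bit_cases[of p] bit_cases[of q] bit_cases[of s] by auto

definition Wset :: "bit \<Rightarrow> bit \<Rightarrow> bit vec \<Rightarrow> bit vec set \<Rightarrow> bit vec set" where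
  "Wset \<alpha> \<beta> x S = (\<lambda>(a, c). V3 (a * \<alpha> + x \<bullet> c) (a * \<beta> + x \<bullet> c) (a \<cdot>\<^sub>v x + c)) ` (UNIV \<times> S)"

lemma code_of_ext_V3:
  assumes M: "M \<in> carrier_mat m N" and x: "x \<in> carrier_vec N"
  shows "code_of (N + 2) (extM (V3 \<alpha> \<beta> x) x M) = Wset \<alpha> \<beta> x (code_of N M)"
proof -
  have u: "V3 \<alpha> \<beta> x \<in> carrier_vec (N + 2)" by (rule V3_carrier[OF x])
  have CM: "code_of N M \<subseteq> carrier_vec N" using sub2_code_of[OF M] by (simp add: sub2_def)
  have e: "a \<cdot>\<^sub>v V3 \<alpha> \<beta> x + V3 (x \<bullet> c) (x \<bullet> c) c = V3 (a * \<alpha> + x \<bullet> c) (a * \<beta> + x \<bullet> c) (a \<cdot>\<^sub>v x + c)"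
    if "c \<in> code_of N M" for a c
  proof -
    have "c \<in> carrier_vec N" using that CM by blast
    then show ?thesis unfolding V3_smult using x by (subst V3_add) auto
  qed
  show ?thesis unfolding code_of_ext[OF M x u] Wset_def
  proof (intro equalityI subsetI)
    fix v assume "v \<in> {a \<cdot>\<^sub>v V3 \<alpha> \<beta> x + V3 (x \<bullet> c) (x \<bullet> c) c |a c. c \<in> code_of N M}"
    then obtain a c where c: "c \<in> code_of N M" and v: "v = a \<cdot>\<^sub>v V3 \<alpha> \<beta> x + V3 (x \<bullet> c) (x \<bullet> c) c" by blast
    have "(a, c) \<in> UNIV \<times> code_of N M" using c by simp
    then show "v \<in> (\<lambda>(a, c). V3 (a * \<alpha> + x \<bullet> c) (a * \<beta> + x \<bullet> c) (a \<cdot>\<^sub>v x + c)) ` (UNIV \<times> code_of N M)"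
      unfolding v e[OF c] by (rule rev_image_eqI) simp
  next
    fix v assume "v \<in> (\<lambda>(a, c). V3 (a * \<alpha> + x \<bullet> c) (a * \<beta> + x \<bullet> c) (a \<cdot>\<^sub>v x + c)) ` (UNIV \<times> code_of N M)"
    then obtain p where p: "p \<in> UNIV \<times> code_of N M" and v0: "v = (\<lambda>(a, c). V3 (a * \<alpha> + x \<bullet> c) (a * \<beta> + x \<bullet> c) (a \<cdot>\<^sub>v x + c)) p" by blast
    obtain a c where pac: "p = (a, c)" by (cases p)
    have c: "c \<in> code_of N M" using p pac by simp
    have v: "v = V3 (a * \<alpha> + x \<bullet> c) (a * \<beta> + x \<bullet> c) (a \<cdot>\<^sub>v x + c)" using v0 pac by simp
    show "v \<in> {a \<cdot>\<^sub>v V3 \<alpha> \<beta> x + V3 (x \<bullet> c) (x \<bullet> c) c |a c. c \<in> code_of N M}"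
      unfolding v e[OF c, symmetric] using c by blast
  qed
qed

lemma vec_add_self2: "v \<in> carrier_vec n \<Longrightarrow> w \<in> carrier_vec n \<Longrightarrow> (v::bit vec) + (v + w) = w"
  by (rule eq_vecI) auto

lemma sp_expand:
  assumes "x \<in> carrier_vec n" "c \<in> carrier_vec n" "d \<in> carrier_vec n"
  shows "(b \<cdot>\<^sub>v x + d) \<bullet> (a \<cdot>\<^sub>v x + (c :: bit vec)) = b * a * (x \<bullet> x) + b * (x \<bullet> c) + a * (d \<bullet> x) + d \<bullet> c"
proof -
  have "(b \<cdot>\<^sub>v x + d) \<bullet> (a \<cdot>\<^sub>v x + c) = (b \<cdot>\<^sub>v x) \<bullet> (a \<cdot>\<^sub>v x + c) + d \<bullet> (a \<cdot>\<^sub>v x + c)"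
    using assms by (intro add_scalar_prod_distrib[of _ n]) auto
  also have "(b \<cdot>\<^sub>v x) \<bullet> (a \<cdot>\<^sub>v x + c) = b * (x \<bullet> (a \<cdot>\<^sub>v x + c))"
    using assms by (intro smult_scalar_prod_distrib[of _ n]) auto
  also have "x \<bullet> (a \<cdot>\<^sub>v x + c) = x \<bullet> (a \<cdot>\<^sub>v x) + x \<bullet> c"
    using assms by (intro scalar_prod_add_distrib[of _ n]) auto
  also have "d \<bullet> (a \<cdot>\<^sub>v x + c) = d \<bullet> (a \<cdot>\<^sub>v x) + d \<bullet> c"
    using assms by (intro scalar_prod_add_distrib[of _ n]) auto
  also have "x \<bullet> (a \<cdot>\<^sub>v x) = a * (x \<bullet> x)" using assms by simp
  also have "d \<bullet> (a \<cdot>\<^sub>v x) = a * (d \<bullet> x)" using assms by simp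
  finally show ?thesis by (simp only: distrib_left mult.assoc add.assoc)
qed

lemma Wset_card:
  assumes ab: "\<alpha> + \<beta> = 1" and x: "x \<in> carrier_vec N" and S: "S \<subseteq> carrier_vec N"
  shows "card (Wset \<alpha> \<beta> x S) = 2 * card S"
proof -
  have fS: "finite S" using finite_subset[OF S finite_carrier_vec_bit] .
  have inj: "inj_on (\<lambda>(a, c). V3 (a * \<alpha> + x \<bullet> c) (a * \<beta> + x \<bullet> c) (a \<cdot>\<^sub>v x + c)) (UNIV \<times> S)"
  proof (rule inj_onI, clarify)
    fix a c a' c' assume c: "c \<in> S" and c': "c' \<in> S"
      and e: "V3 (a * \<alpha> + x \<bullet> c) (a * \<beta> + x \<bullet> c) (a \<cdot>\<^sub>v x + c) = V3 (a' * \<alpha> + x \<bullet> c') (a' * \<beta> + x \<bullet> c') (a' \<cdot>\<^sub>v x + c')"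
    have cc: "c \<in> carrier_vec N" "c' \<in> carrier_vec N" using c c' S by auto
    have e1: "a * \<alpha> + x \<bullet> c = a' * \<alpha> + x \<bullet> c'" and e2: "a * \<beta> + x \<bullet> c = a' * \<beta> + x \<bullet> c'"
      and e3: "a \<cdot>\<^sub>v x + c = a' \<cdot>\<^sub>v x + c'"
      using e V3_eq[of "a' \<cdot>\<^sub>v x + c'" "a \<cdot>\<^sub>v x + c"] cc x by auto
    have "(a * \<alpha> + x \<bullet> c) + (a * \<beta> + x \<bullet> c) = (a' * \<alpha> + x \<bullet> c') + (a' * \<beta> + x \<bullet> c')"
      using e1 e2 by simp
    then have "a * (\<alpha> + \<beta>) = a' * (\<alpha> + \<beta>)" unfolding bit_pair distrib_left .
    then have aa: "a = a'" using ab by simp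
    have "c = a \<cdot>\<^sub>v x + (a \<cdot>\<^sub>v x + c)" using vec_add_self2[of "a \<cdot>\<^sub>v x" N c] cc x by simp
    also have "\<dots> = a \<cdot>\<^sub>v x + (a \<cdot>\<^sub>v x + c')" using e3 aa by simp
    also have "\<dots> = c'" using vec_add_self2[of "a \<cdot>\<^sub>v x" N c'] cc x by simp
    finally have "c = c'" .
    then show "a = a' \<and> c = c'" using aa by simp
  qed
  have "card (Wset \<alpha> \<beta> x S) = card ((UNIV::bit set) \<times> S)"
    unfolding Wset_def using card_image[OF inj] by simp
  also have "\<dots> = 2 * card S" by (simp add: card_cartesian_product card_UNIV_bit)
  finally show ?thesis .
qed

lemma zero_smult_add: "x \<in> carrier_vec n \<Longrightarrow> c \<in> carrier_vec n \<Longrightarrow> (0::bit) \<cdot>\<^sub>v x + c = c"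
  by (rule eq_vecI) auto

lemma one_smult_add0: "x \<in> carrier_vec n \<Longrightarrow> (1::bit) \<cdot>\<^sub>v x + 0\<^sub>v n = x"
  by (rule eq_vecI) auto

lemma sp_expand2:
  assumes "x \<in> carrier_vec n" "c \<in> carrier_vec n" "w \<in> carrier_vec n"
  shows "w \<bullet> (a \<cdot>\<^sub>v x + (c :: bit vec)) = a * (w \<bullet> x) + w \<bullet> c"
proof -
  have "w \<bullet> (a \<cdot>\<^sub>v x + c) = w \<bullet> (a \<cdot>\<^sub>v x) + w \<bullet> c"
    using assms by (intro scalar_prod_add_distrib[of _ n]) auto
  then show ?thesis using assms by simp
qed

lemma Wset_mem: "v \<in> Wset \<alpha> \<beta> x S \<longleftrightarrow> (\<exists>a c. c \<in> S \<and> v = V3 (a * \<alpha> + x \<bullet> c) (a * \<beta> + x \<bullet> c) (a \<cdot>\<^sub>v x + c))"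
  unfolding Wset_def by auto

lemma Wset_memI: "c \<in> S \<Longrightarrow> V3 (a * \<alpha> + x \<bullet> c) (a * \<beta> + x \<bullet> c) (a \<cdot>\<^sub>v x + c) \<in> Wset \<alpha> \<beta> x S"
  unfolding Wset_mem by blast

lemma hull_C3:
  assumes x: "x \<in> carrier_vec n" and xx: "x \<bullet> x = 0" and S: "sub2 n C"
  shows "code_hull (n + 2) (Wset 1 0 x C) = (\<lambda>c. V3 (x \<bullet> c) (x \<bullet> c) c) ` code_hull n C"
proof (intro equalityI subsetI)
  have CC: "C \<subseteq> carrier_vec n" and C0: "0\<^sub>v n \<in> C" using S by (auto simp: sub2_def)
  fix v assume v: "v \<in> code_hull (n + 2) (Wset 1 0 x C)"
  then have "v \<in> Wset 1 0 x C" unfolding code_hull_def by blast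
  then obtain a c where c: "c \<in> C" and vd: "v = V3 (a * 1 + x \<bullet> c) (a * 0 + x \<bullet> c) (a \<cdot>\<^sub>v x + c)"
    unfolding Wset_mem by blast
  have cc: "c \<in> carrier_vec n" using c CC by blast
  have vdual: "\<forall>w \<in> Wset 1 0 x C. v \<bullet> w = 0" using v unfolding code_hull_def dual_def by blast
  have u0: "V3 (1 * 1 + x \<bullet> 0\<^sub>v n) (1 * 0 + x \<bullet> 0\<^sub>v n) (1 \<cdot>\<^sub>v x + 0\<^sub>v n) \<in> Wset 1 0 x C"
    by (rule Wset_memI[OF C0])
  have "0 = v \<bullet> V3 (1 * 1 + x \<bullet> 0\<^sub>v n) (1 * 0 + x \<bullet> 0\<^sub>v n) (1 \<cdot>\<^sub>v x + 0\<^sub>v n)"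
    using vdual u0 by simp
  also have "\<dots> = (a * 1 + x \<bullet> c) * 1 + (a * 0 + x \<bullet> c) * 0 + (a \<cdot>\<^sub>v x + c) \<bullet> x"
    unfolding vd using x cc by (subst V3_scalar) (auto simp: one_smult_add0)
  also have "(a \<cdot>\<^sub>v x + c) \<bullet> x = a * (x \<bullet> x) + c \<bullet> x"
    using x cc add_scalar_prod_distrib[of "a \<cdot>\<^sub>v x" n c x] by simp
  also have "c \<bullet> x = x \<bullet> c" using comm_scalar_prod[OF cc x] .
  finally have e0: "0 = (a * 1 + x \<bullet> c) * 1 + (a * 0 + x \<bullet> c) * 0 + (a * (x \<bullet> x) + x \<bullet> c)" .
  have a0: "a = 0" using e0 xx bit_cases[of a] bit_cases[of "x \<bullet> c"] by auto
  have vd2: "v = V3 (x \<bullet> c) (x \<bullet> c) c" unfolding vd a0 using x cc by (simp add: zero_smult_add)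
  have "c \<bullet> c' = 0" if c': "c' \<in> C" for c'
  proof -
    have cc': "c' \<in> carrier_vec n" using c' CC by blast
    have w: "V3 (0 * 1 + x \<bullet> c') (0 * 0 + x \<bullet> c') (0 \<cdot>\<^sub>v x + c') \<in> Wset 1 0 x C"
      by (rule Wset_memI[OF c'])
    have "0 = v \<bullet> V3 (0 * 1 + x \<bullet> c') (0 * 0 + x \<bullet> c') (0 \<cdot>\<^sub>v x + c')" using vdual w by simp
    also have "\<dots> = (x \<bullet> c) * (x \<bullet> c') + (x \<bullet> c) * (x \<bullet> c') + c \<bullet> c'"
      unfolding vd2 using x cc cc' by (subst V3_scalar) (auto simp: zero_smult_add)
    finally show "c \<bullet> c' = 0" by simp
  qed
  then have "c \<in> code_hull n C" unfolding code_hull_def dual_def using c cc by blast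
  then show "v \<in> (\<lambda>c. V3 (x \<bullet> c) (x \<bullet> c) c) ` code_hull n C" unfolding vd2 by blast
next
  have CC: "C \<subseteq> carrier_vec n" using S by (auto simp: sub2_def)
  fix v assume "v \<in> (\<lambda>c. V3 (x \<bullet> c) (x \<bullet> c) c) ` code_hull n C"
  then obtain c where c: "c \<in> C" and cd: "\<forall>c'\<in>C. c \<bullet> c' = 0" and cc: "c \<in> carrier_vec n"
    and vd: "v = V3 (x \<bullet> c) (x \<bullet> c) c"
    unfolding code_hull_def dual_def by blast
  have "V3 (0 * 1 + x \<bullet> c) (0 * 0 + x \<bullet> c) (0 \<cdot>\<^sub>v x + c) \<in> Wset 1 0 x C" by (rule Wset_memI[OF c])
  then have vW: "v \<in> Wset 1 0 x C" unfolding vd using x cc by (simp add: zero_smult_add)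
  have "v \<bullet> w = 0" if w: "w \<in> Wset 1 0 x C" for w
  proof -
    obtain a c' where c': "c' \<in> C" and wd: "w = V3 (a * 1 + x \<bullet> c') (a * 0 + x \<bullet> c') (a \<cdot>\<^sub>v x + c')"
      using w unfolding Wset_mem by blast
    have cc': "c' \<in> carrier_vec n" using c' CC by blast
    have "v \<bullet> w = (x \<bullet> c) * (a * 1 + x \<bullet> c') + (x \<bullet> c) * (a * 0 + x \<bullet> c') + c \<bullet> (a \<cdot>\<^sub>v x + c')"
      unfolding vd wd using x cc cc' by (subst V3_scalar) auto
    also have "c \<bullet> (a \<cdot>\<^sub>v x + c') = a * (c \<bullet> x) + c \<bullet> c'" by (rule sp_expand2[OF x cc' cc])
    also have "c \<bullet> x = x \<bullet> c" using comm_scalar_prod[OF cc x] .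
    also have "c \<bullet> c' = 0" using cd c' by blast
    finally show "v \<bullet> w = 0" using bit_cases[of a] bit_cases[of "x \<bullet> c"] bit_cases[of "x \<bullet> c'"] by auto
  qed
  moreover have "v \<in> carrier_vec (n + 2)" unfolding vd by (rule V3_carrier[OF cc])
  ultimately show "v \<in> code_hull (n + 2) (Wset 1 0 x C)" unfolding code_hull_def dual_def using vW by blast
qed

lemma dual_C3:
  assumes x: "x \<in> carrier_vec n" and xx: "x \<bullet> x = 0" and S: "sub2 n C"
  shows "dual (n + 2) (Wset 1 0 x C) = Wset 0 1 x (dual n C)"
proof (intro equalityI subsetI)
  have CC: "C \<subseteq> carrier_vec n" and C0: "0\<^sub>v n \<in> C" using S by (auto simp: sub2_def)
  fix v assume v: "v \<in> dual (n + 2) (Wset 1 0 x C)"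
  have vc: "v \<in> carrier_vec (n + 2)" and vdual: "\<forall>w \<in> Wset 1 0 x C. v \<bullet> w = 0"
    using v unfolding dual_def by auto
  define p where "p = v $ 0"
  define q where "q = v $ 1"
  define w' where "w' = vec n (\<lambda>j. v $ (j + 2))"
  have wc: "w' \<in> carrier_vec n" unfolding w'_def by simp
  have vd: "v = V3 p q w'" unfolding p_def q_def w'_def by (rule V3_decomp[OF vc])
  have u0: "V3 (1 * 1 + x \<bullet> 0\<^sub>v n) (1 * 0 + x \<bullet> 0\<^sub>v n) (1 \<cdot>\<^sub>v x + 0\<^sub>v n) \<in> Wset 1 0 x C"
    by (rule Wset_memI[OF C0])
  have "0 = v \<bullet> V3 (1 * 1 + x \<bullet> 0\<^sub>v n) (1 * 0 + x \<bullet> 0\<^sub>v n) (1 \<cdot>\<^sub>v x + 0\<^sub>v n)"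
    using vdual u0 by simp
  also have "\<dots> = p * 1 + q * 0 + w' \<bullet> x"
    unfolding vd using x wc by (subst V3_scalar) (auto simp: one_smult_add0)
  finally have e0: "0 = p * 1 + q * 0 + w' \<bullet> x" .
  have ec: "p * (x \<bullet> c) + q * (x \<bullet> c) + w' \<bullet> c = 0" if c: "c \<in> C" for c
  proof -
    have cc: "c \<in> carrier_vec n" using c CC by blast
    have w: "V3 (0 * 1 + x \<bullet> c) (0 * 0 + x \<bullet> c) (0 \<cdot>\<^sub>v x + c) \<in> Wset 1 0 x C"
      by (rule Wset_memI[OF c])
    have "0 = v \<bullet> V3 (0 * 1 + x \<bullet> c) (0 * 0 + x \<bullet> c) (0 \<cdot>\<^sub>v x + c)" using vdual w by simp
    also have "\<dots> = p * (x \<bullet> c) + q * (x \<bullet> c) + w' \<bullet> c"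
      unfolding vd using x cc wc by (subst V3_scalar) (auto simp: zero_smult_add)
    finally show ?thesis by simp
  qed
  define d where "d = (p + q) \<cdot>\<^sub>v x + w'"
  have dc: "d \<in> carrier_vec n" unfolding d_def using x wc by simp
  have "d \<bullet> c = 0" if c: "c \<in> C" for c
  proof -
    have cc: "c \<in> carrier_vec n" using c CC by blast
    have "d \<bullet> c = (p + q) * (x \<bullet> c) + w' \<bullet> c"
      unfolding d_def using x cc wc add_scalar_prod_distrib[of "(p + q) \<cdot>\<^sub>v x" n w' c] by simp
    also have "\<dots> = p * (x \<bullet> c) + q * (x \<bullet> c) + w' \<bullet> c" by (simp add: distrib_right)
    finally show ?thesis using ec[OF c] by simp
  qed
  then have dD: "d \<in> dual n C" unfolding dual_def using dc by blast
  have xd: "x \<bullet> d = (p + q) * (x \<bullet> x) + x \<bullet> w'" unfolding d_def by (rule sp_expand2[OF x wc x])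
  have "x \<bullet> w' = w' \<bullet> x" using comm_scalar_prod[OF x wc] .
  then have xdp: "x \<bullet> d = p" using xd xx e0 bit_cases[of p] bit_cases[of q] bit_cases[of "w' \<bullet> x"] by auto
  have wd: "(p + q) \<cdot>\<^sub>v x + d = w'" unfolding d_def
    by (rule vec_add_self2[of _ n]) (use x wc in auto)
  have "v = V3 ((p + q) * 0 + x \<bullet> d) ((p + q) * 1 + x \<bullet> d) ((p + q) \<cdot>\<^sub>v x + d)"
    unfolding vd wd xdp using bit_cases[of p] bit_cases[of q] by auto
  then show "v \<in> Wset 0 1 x (dual n C)" using Wset_memI[OF dD, of "p + q" 0 x 1] by simp
next
  have CC: "C \<subseteq> carrier_vec n" using S by (auto simp: sub2_def)
  fix v assume "v \<in> Wset 0 1 x (dual n C)"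
  then obtain b d where dD: "d \<in> dual n C" and vd: "v = V3 (b * 0 + x \<bullet> d) (b * 1 + x \<bullet> d) (b \<cdot>\<^sub>v x + d)"
    unfolding Wset_mem by blast
  have dc: "d \<in> carrier_vec n" and dd: "\<forall>c\<in>C. d \<bullet> c = 0" using dD unfolding dual_def by auto
  have "v \<bullet> w = 0" if w: "w \<in> Wset 1 0 x C" for w
  proof -
    obtain a c where c: "c \<in> C" and wd: "w = V3 (a * 1 + x \<bullet> c) (a * 0 + x \<bullet> c) (a \<cdot>\<^sub>v x + c)"
      using w unfolding Wset_mem by blast
    have cc: "c \<in> carrier_vec n" using c CC by blast
    have "v \<bullet> w = (b * 0 + x \<bullet> d) * (a * 1 + x \<bullet> c) + (b * 1 + x \<bullet> d) * (a * 0 + x \<bullet> c)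
        + (b \<cdot>\<^sub>v x + d) \<bullet> (a \<cdot>\<^sub>v x + c)"
      unfolding vd wd using x cc dc by (subst V3_scalar) auto
    also have "(b \<cdot>\<^sub>v x + d) \<bullet> (a \<cdot>\<^sub>v x + c) = b * a * (x \<bullet> x) + b * (x \<bullet> c) + a * (d \<bullet> x) + d \<bullet> c"
      by (rule sp_expand[OF x cc dc])
    also have "d \<bullet> x = x \<bullet> d" using comm_scalar_prod[OF dc x] .
    also have "d \<bullet> c = 0" using dd c by blast
    finally show "v \<bullet> w = 0" using xx bit_cases[of a] bit_cases[of b] bit_cases[of "x \<bullet> c"] bit_cases[of "x \<bullet> d"]
      by auto
  qed
  moreover have "v \<in> carrier_vec (n + 2)" unfolding vd by (rule V3_carrier) (use x dc in simp)
  ultimately show "v \<in> dual (n + 2) (Wset 1 0 x C)" unfolding dual_def by blast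
qed

lemma code_dim_eq: "sub2 n W \<Longrightarrow> card W = 2 ^ d \<Longrightarrow> code_dim n W = d"
  using sub2_card[of n W] by (simp add: power_inject_exp)

theorem theorem3:
  fixes n k l :: nat and G H :: "bit mat" and C :: "bit vec set" and x :: "bit vec"
  assumes "is_generator_matrix n k G C"
    and "is_parity_check_matrix n k H C"
    and "code_dim n (code_hull n C) = l" and "l \<le> k"
    and "x \<in> carrier_vec n" and "x \<bullet> x = 0"
  shows "is_generator_matrix (n + 2) (k + 1) (constr_G3 x G) (code_of (n + 2) (constr_G3 x G))
     \<and> code_dim (n + 2) (code_hull (n + 2) (code_of (n + 2) (constr_G3 x G))) = l
     \<and> is_parity_check_matrix (n + 2) (k + 1) (constr_H3 x H) (code_of (n + 2) (constr_G3 x G))"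
proof -
  note x = assms(5) and xx = assms(6)
  have G: "G \<in> carrier_mat k n" and GC: "code_of n G = C" and dC: "code_dim n C = k"
    using assms(1) unfolding is_generator_matrix_def by auto
  have H: "H \<in> carrier_mat (n - k) n" and HC: "code_of n H = dual n C" and dD: "code_dim n (dual n C) = n - k"
    using assms(2) unfolding is_parity_check_matrix_def is_generator_matrix_def by auto
  have SC: "sub2 n C" using sub2_code_of[OF G] GC by simp
  have CC: "C \<subseteq> carrier_vec n" using SC by (simp add: sub2_def)
  have cardC: "card C = 2 ^ k" using sub2_card[OF SC] dC by simp
  have "card C \<le> card (carrier_vec n :: bit vec set)"
    by (rule card_mono[OF finite_carrier_vec_bit CC])
  then have "(2::nat) ^ k \<le> 2 ^ n" using cardC card_carrier_vec_bit by simp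
  then have kn: "k \<le> n" by (simp add: power_le_imp_le_exp)
  have dx: "dim_vec x = n" using x by simp
  have C3eq: "code_of (n + 2) (constr_G3 x G) = Wset 1 0 x C"
    using constr_G3_ext[of G x] G dx code_of_ext_V3[OF G x, of 1 0] GC by simp
  have G3c: "constr_G3 x G \<in> carrier_mat (k + 1) (n + 2)" using G unfolding constr_G3_def by auto
  have SC3: "sub2 (n + 2) (Wset 1 0 x C)" using sub2_code_of[OF G3c] C3eq by simp
  have C3sub: "Wset 1 0 x C \<subseteq> carrier_vec (n + 2)" using SC3 by (simp add: sub2_def)
  have "card (Wset 1 0 x C) = 2 ^ (k + 1)" using Wset_card[OF _ x CC, of 1 0] cardC by simp
  then have dC3: "code_dim (n + 2) (Wset 1 0 x C) = k + 1" by (rule code_dim_eq[OF SC3])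
  have part1: "is_generator_matrix (n + 2) (k + 1) (constr_G3 x G) (code_of (n + 2) (constr_G3 x G))"
    unfolding is_generator_matrix_def using G3c C3eq dC3 by simp
  have SH: "sub2 n (code_hull n C)" unfolding code_hull_def by (rule sub2_Int[OF SC sub2_dual[OF CC]])
  have SH3: "sub2 (n + 2) (code_hull (n + 2) (Wset 1 0 x C))"
    unfolding code_hull_def by (rule sub2_Int[OF SC3 sub2_dual[OF C3sub]])
  have HCsub: "code_hull n C \<subseteq> carrier_vec n" using SH by (simp add: sub2_def)
  have inj: "inj_on (\<lambda>c. V3 (x \<bullet> c) (x \<bullet> c) c) (code_hull n C)"
  proof (rule inj_onI)
    fix c c' assume c: "c \<in> code_hull n C" and c': "c' \<in> code_hull n C" and e: "V3 (x \<bullet> c) (x \<bullet> c) c = V3 (x \<bullet> c') (x \<bullet> c') c'"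
    have "c \<in> carrier_vec n" "c' \<in> carrier_vec n" using c c' HCsub by auto
    then have "dim_vec c' = dim_vec c" by simp
    then show "c = c'" using e V3_eq by blast
  qed
  have "card (code_hull (n + 2) (Wset 1 0 x C)) = card (code_hull n C)"
    unfolding hull_C3[OF x xx SC] using card_image[OF inj] .
  also have "\<dots> = 2 ^ l" using sub2_card[OF SH] assms(3) by simp
  finally have part2: "code_dim (n + 2) (code_hull (n + 2) (code_of (n + 2) (constr_G3 x G))) = l"
    unfolding C3eq by (rule code_dim_eq[OF SH3])
  have H3eq: "code_of (n + 2) (constr_H3 x H) = dual (n + 2) (Wset 1 0 x C)"
    using constr_H3_ext[of H x] H dx code_of_ext_V3[OF H x, of 0 1] HC dual_C3[OF x xx SC] by simp
  have H3c: "constr_H3 x H \<in> carrier_mat (n + 2 - (k + 1)) (n + 2)" using H kn unfolding constr_H3_def by auto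
  have SD: "sub2 (n + 2) (dual (n + 2) (Wset 1 0 x C))" by (rule sub2_dual[OF C3sub])
  have DCsub: "dual n C \<subseteq> carrier_vec n" unfolding dual_def by blast
  have "card (dual (n + 2) (Wset 1 0 x C)) = 2 * card (dual n C)"
    unfolding dual_C3[OF x xx SC] using Wset_card[OF _ x DCsub, of 0 1] by simp
  also have "\<dots> = 2 ^ (n + 2 - (k + 1))" using sub2_card[OF sub2_dual[OF CC]] dD kn
    by (simp add: Suc_diff_le)
  finally have dD3: "code_dim (n + 2) (dual (n + 2) (Wset 1 0 x C)) = n + 2 - (k + 1)"
    by (rule code_dim_eq[OF SD])
  have part3: "is_parity_check_matrix (n + 2) (k + 1) (constr_H3 x H) (code_of (n + 2) (constr_G3 x G))"
    unfolding is_parity_check_matrix_def is_generator_matrix_def C3eq using H3c H3eq dD3 by simp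
  show ?thesis using part1 part2 part3 by blast
qed

end
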